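(* For every integer $k\ge1$ let $a_k=(a_k(n))_{n\ge0}$ and $b_k=(b_k(n))_{n\ge0}$ be given by $a_k(n)=A_{n+k-1,k}$ and $b_k(n)=B_{n+k,k}$. Then: (i) $a_k,b_k\in\ell^1(\mathbb{N}^0,\frac{1}{4^n})$ with $\|a_k\|_{1,\frac1{4^n}}=2^{2k-1}$ and $\|b_k\|_{1,\frac1{4^n}}=2^{2k}$; (ii) $Z(a_k)(z)=(C(z))^{2k-1}$ and $Z(b_k)(z)=(C(z))^{2k}$ for $|z|<\frac14$; (iii) $a_k$ equals the convolution product of $2k-1$ copies of $c$, and $b_k$ equals the convolution product of $2k$ copies of $c$ (in the paper's notation, $a_k=c^{\ast(2k-2)}$ and $b_k=c^{\ast(2k-1)}$).
   Context: $C_n=\frac{1}{n+1}\binom{2n}{n}$ are the Catalan numbers, $c=(C_n)_{n\ge0}$, and $C(z)=\sum_{n\ge0}C_nz^n=\frac{1-\sqrt{1-4z}}{2z}$ for $|z|<\frac14$. The Catalan triangle numbers are $B_{n,k}=\frac{k}{n}\binom{2n}{n-k}$ ($n\ge1$, $1\le k\le n$) and $A_{n,k}=\frac{2k-1}{2n+1}\binom{2n+1}{n+1-k}$ ($n\ge0$, $1\le k\le n+1$). $\ell^1(\mathbb{N}^0,\frac1{4^n})$ is the Banach algebra of complex sequences $a=(a(n))_{n\ge0}$ with $\|a\|_{1,\frac1{4^n}}=\sum_{n\ge0}|a(n)|/4^n<\infty$, with convolution product $(a\ast b)(n)=\sum_{j=0}^n a(n-j)b(j)$. The paper's convention for convolution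 powers is $a^{\ast0}=a$, $a^{\ast n}=a^{\ast(n-1)}\ast a$, so $a^{\ast m}$ is the product of $m+1$ copies of $a$. $Z(a)(z)=\sum_{n\ge0}a(n)z^n$ is the $Z$-transform. *)

theory Defs
  imports "HOL-Analysis.Analysis"
begin

definition catalan :: "nat \<Rightarrow> complex" where
  "catalan n = of_nat ((2*n) choose n) / of_nat (n+1)"

definition catB :: "nat \<Rightarrow> nat \<Rightarrow> complex" where
  "catB n k = of_nat k / of_nat n * of_nat ((2*n) choose (n-k))"

definition catA :: "nat \<Rightarrow> nat \<Rightarrow> complex" where
  "catA n k = (2 * of_nat k - 1) / (2 * of_nat n + 1) * of_nat ((2*n+1) choose (n+1-k))"

text \<open>Generating function C(z) = (1 - sqrt(1-4z))/(2z), extended by its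
  limit value 1 at z = 0 (principal square root).\<close>
definition catalan_gf :: "complex \<Rightarrow> complex" where
  "catalan_gf z = (if z = 0 then 1 else (1 - csqrt (1 - 4*z)) / (2*z))"

definition in_l1w :: "(nat \<Rightarrow> complex) \<Rightarrow> bool" where
  "in_l1w a \<longleftrightarrow> summable (\<lambda>n. norm (a n) / 4^n)"

definition l1w_norm :: "(nat \<Rightarrow> complex) \<Rightarrow> real" where
  "l1w_norm a = (\<Sum>n. norm (a n) / 4^n)"

text \<open>Convolution product and the paper's convolution powers
  (a^{*0} = a, a^{*n} = a^{*(n-1)} * a).\<close>
definition conv :: "(nat \<Rightarrow> complex) \<Rightarrow> (nat \<Rightarrow> complex) \<Rightarrow> nat \<Rightarrow> complex" where
  "conv a b n = (\<Sum>j\<le>n. a (n-j) * b j)"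

fun conv_pow :: "(nat \<Rightarrow> complex) \<Rightarrow> nat \<Rightarrow> nat \<Rightarrow> complex" where
  "conv_pow a 0 = a"
| "conv_pow a (Suc m) = conv (conv_pow a m) a"

text \<open>Z-transform as a formal sum; convergence is asserted separately via sums.\<close>
definition Ztrans :: "(nat \<Rightarrow> complex) \<Rightarrow> complex \<Rightarrow> complex" where
  "Ztrans a z = (\<Sum>n. a n * z^n)"

end

theory Submission
  imports Defs "HOL-Computational_Algebra.Formal_Power_Series"
begin


definition gg :: "nat \<Rightarrow> nat \<Rightarrow> complex" where
  "gg m n = (if m = 0 then (if n = 0 then 1 else 0)
     else of_nat m / of_nat (2*n+m) * of_nat ((2*n+m) choose n))"

definition HH :: "nat \<Rightarrow> nat \<Rightarrow> int" where
  "HH a n = int (a choose Suc n) - int (a choose n)"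

lemma gg_0: "m > 0 \<Longrightarrow> gg m 0 = 1"
  by (simp add: gg_def)

lemma gg_Suc: assumes "m > 0" shows "gg m (Suc n) = of_int (HH (2*n+m+1) n)"
proof -
  define a where "a = 2*n+m+1"
  have e1: "(n+1) * (Suc a choose Suc n) = Suc a * (a choose n)"
    using Suc_times_binomial[of n a] by simp
  have e2: "(n+1) * (a choose Suc n) = (n+m+1) * (a choose n)"
    using binomial_absorption[of n a] binomial_absorb_comp[of a n] by (simp add: a_def)
  have e1': "(of_nat n+1) * (of_nat (Suc a choose Suc n)::complex) = (1 + of_nat a) * of_nat (a choose n)"
    using arg_cong[OF e1, of "of_nat :: nat \<Rightarrow> complex"] by (simp only: of_nat_mult of_nat_add of_nat_1 of_nat_Suc)
  have e2': "(of_nat n+1) * (of_nat (a choose Suc n)::complex) = (of_nat n + of_nat m + 1) * of_nat (a choose n)"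
    using arg_cong[OF e2, of "of_nat :: nat \<Rightarrow> complex"] by (simp only: of_nat_mult of_nat_add of_nat_1 of_nat_Suc)
  have nz: "(1 + of_nat n :: complex) \<noteq> 0" "(of_nat n + 1 :: complex) \<noteq> 0" "(1 + of_nat a :: complex) \<noteq> 0" "(of_nat a + 1 :: complex) \<noteq> 0"
    by (metis of_nat_Suc of_nat_eq_0_iff nat.distinct(1) add.commute)+
  have e1'': "(of_nat (Suc a choose Suc n)::complex) = (1 + of_nat a) * of_nat (a choose n) / (of_nat n+1)"
    using e1' nz by (simp add: field_simps del: binomial_Suc_Suc)
  have A: "2 * Suc n + m = Suc a" by (simp add: a_def)
  have "gg m (Suc n) = of_nat m / (of_nat a + 1) * of_nat (Suc a choose Suc n)"
    using assms by (simp add: gg_def a_def del: binomial_Suc_Suc)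
  also have "\<dots> = of_nat m * of_nat (a choose n) / (of_nat n + 1)"
    unfolding e1'' using nz by (simp add: add.commute[of "of_nat a" 1] add.commute[of "of_nat n" 1] del: binomial_Suc_Suc)
  also have "\<dots> = of_int (HH a n)"
    using e2' nz by (simp add: HH_def field_simps)
  finally show ?thesis by (simp add: a_def)
qed

lemma gg_Suc': "m > 0 \<Longrightarrow> a = 2*n+m+1 \<Longrightarrow> gg m (Suc n) = of_int (HH a n)"
  using gg_Suc by simp

lemma HH_rec: "HH (Suc A) (Suc q) = HH A (Suc q) + HH A q"
  by (simp add: HH_def)

lemma gg_rec1: "gg 1 (Suc n) = gg 2 n"
proof (cases n)
  case 0
  then show ?thesis by (simp add: gg_Suc gg_0 HH_def numeral_2_eq_2)
next
  case (Suc q)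
  have s: "(Suc (Suc (2*q+1)) choose Suc (Suc q)) = (Suc (Suc (2*q+1)) choose Suc q)"
    using binomial_symmetric[of "Suc q" "Suc (Suc (2*q+1))"] by simp
  have "gg 1 (Suc (Suc q)) = of_int (HH (Suc(Suc(Suc(Suc(2*q))))) (Suc q))" by (rule gg_Suc') auto
  moreover have "gg 2 (Suc q) = of_int (HH (2*q+3) q)" by (rule gg_Suc') auto
  moreover have "HH (Suc(Suc(Suc(Suc(2*q))))) (Suc q) = HH (2*q+3) q"
    using s by (simp add: HH_def numeral_eq_Suc)
  ultimately show ?thesis using Suc by simp
qed

lemma gg_rec2: "gg (p+2) (Suc n) = gg (p+1) (Suc n) + gg (p+3) n"
proof (cases n)
  case 0
  then show ?thesis by (simp add: gg_Suc gg_0 HH_def)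
next
  case (Suc q)
  have "gg (p+2) (Suc (Suc q)) = of_int (HH (Suc (Suc(Suc(Suc(Suc(2*q+p)))))) (Suc q))" by (rule gg_Suc') auto
  moreover have "gg (p+1) (Suc (Suc q)) = of_int (HH (Suc(Suc(Suc(Suc(2*q+p))))) (Suc q))" by (rule gg_Suc') auto
  moreover have "gg (p+3) (Suc q) = of_int (HH (Suc(Suc(Suc(Suc(2*q+p))))) q)" by (rule gg_Suc') auto
  ultimately show ?thesis using Suc by (simp only: HH_rec) simp
qed



definition Cf :: "complex fps" where "Cf = Abs_fps catalan"
definition Tf :: "complex fps" where "Tf = Abs_fps (\<lambda>n. ((1/2) gchoose n) * (-4)^n)"

lemma conv_fps: "Abs_fps (conv a b) = Abs_fps a * Abs_fps b"
proof (rule fps_ext)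
  fix n
  have "conv a b n = (\<Sum>j=0..n. a (n-j) * b j)" by (simp add: conv_def atLeast0AtMost)
  also have "\<dots> = (\<Sum>i=0..n. a (n-(n+0-i)) * b (n+0-i))"
    by (rule sum.atLeastAtMost_rev)
  also have "\<dots> = (\<Sum>i=0..n. a i * b (n-i))"
    by (rule sum.cong) auto
  finally show "fps_nth (Abs_fps (conv a b)) n = fps_nth (Abs_fps a * Abs_fps b) n"
    by (simp add: fps_mult_nth)
qed

lemma gch_Suc: "((a::complex) gchoose (Suc k)) = (a - of_nat k) / of_nat (Suc k) * (a gchoose k)"
proof -
  have "a * (a gchoose k) = of_nat k * (a gchoose k) + of_nat (Suc k) * (a gchoose (Suc k))"
    by (rule gbinomial_mult_1)
  then have "of_nat (Suc k) * (a gchoose (Suc k)) = (a - of_nat k) * (a gchoose k)"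
    by (simp add: algebra_simps)
  then show ?thesis
    by (simp add: field_simps del: of_nat_Suc)
qed

lemma cat_Suc: "catalan (Suc n) * (of_nat n + 2) = 2 * (2 * of_nat n + 1) * catalan n"
proof -
  have s: "(Suc (2*n) choose n) = (Suc (2*n) choose Suc n)"
    using binomial_symmetric[of n "Suc (2*n)"] by simp
  have h1: "Suc n * (Suc (2*n) choose Suc n) = Suc (2*n) * (2*n choose n)"
    using Suc_times_binomial[of n "2*n"] by simp
  have h2: "(2 * Suc n choose Suc n) = 2 * (Suc (2*n) choose Suc n)"
  proof -
    have "(2 * Suc n choose Suc n) = (Suc (Suc (2*n)) choose Suc n)" by simp
    also have "\<dots> = (Suc (2*n) choose n) + (Suc (2*n) choose Suc n)"
      by (rule binomial_Suc_Suc)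
    finally show ?thesis unfolding s by simp
  qed
  have h3: "Suc n * (2 * Suc n choose Suc n) = 2 * (Suc (2*n)) * (2*n choose n)"
    unfolding h2 using h1 by (simp del: binomial_Suc_Suc)
  have h3': "(of_nat n + 1) * (of_nat (2 * Suc n choose Suc n) :: complex) = 2 * (2 * of_nat n + 1) * of_nat (2*n choose n)"
    using arg_cong[OF h3, of "of_nat :: nat \<Rightarrow> complex"] by (simp add: algebra_simps del: binomial_Suc_Suc)
  have nz: "(of_nat n + 1 :: complex) \<noteq> 0" "(of_nat n + 2 :: complex) \<noteq> 0"
  proof -
    have e: "(of_nat n + 1 :: complex) = of_nat (n + 1)" "(of_nat n + 2 :: complex) = of_nat (n + 2)" by simp_all
    show "(of_nat n + 1 :: complex) \<noteq> 0" "(of_nat n + 2 :: complex) \<noteq> 0"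
      unfolding e of_nat_eq_0_iff by simp_all
  qed
  have c1: "catalan (Suc n) = of_nat (2 * Suc n choose Suc n) / (of_nat n + 2)"
    unfolding catalan_def by (simp del: binomial_Suc_Suc add: add.commute)
  have c0: "catalan n = of_nat (2 * n choose n) / (of_nat n + 1)"
    unfolding catalan_def by (simp add: add.commute)
  show ?thesis unfolding c1 c0 using h3' nz
    by (simp add: field_simps del: binomial_Suc_Suc)
qed

lemma t_Suc: "((1/2::complex) gchoose (Suc n)) * (-4)^(Suc n) = -2 * catalan n"
proof (induction n)
  case 0
  then show ?case by (simp add: catalan_def)
next
  case (Suc n)
  have "((1/2::complex) gchoose (Suc (Suc n))) * (-4)^(Suc (Suc n))
     = ((1/2 - of_nat (Suc n)) / of_nat (Suc (Suc n)) * (-4)) * (((1/2::complex) gchoose (Suc n)) * (-4)^(Suc n))"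
    by (simp only: gch_Suc[of _ "Suc n"] power_Suc mult_ac)
  also have "\<dots> = ((1/2 - of_nat (Suc n)) / of_nat (Suc (Suc n)) * (-4)) * (-2 * catalan n)"
    using Suc by simp
  also have "\<dots> = -2 * catalan (Suc n)"
  proof -
    have nz: "(of_nat n + 2 :: complex) \<noteq> 0"
    proof -
      have e: "(of_nat n + 2 :: complex) = of_nat (n + 2)" by simp
      show ?thesis unfolding e of_nat_eq_0_iff by simp
    qed
    have nz2: "(4 + of_nat n * 2 :: complex) \<noteq> 0" "(2 + of_nat n :: complex) \<noteq> 0"
    proof -
      have e: "(4 + of_nat n * 2 :: complex) = of_nat (4 + n * 2)" by simp
      show "(4 + of_nat n * 2 :: complex) \<noteq> 0" unfolding e of_nat_eq_0_iff by simp
      show "(2 + of_nat n :: complex) \<noteq> 0" using nz by (simp add: add.commute)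
    qed
    have eq: "catalan (Suc n) = 2 * (2 * of_nat n + 1) * catalan n / (of_nat n + 2)"
      using cat_Suc[of n] nz by (simp add: field_simps)
    show ?thesis unfolding eq using nz nz2 by (simp add: field_simps)
  qed
  finally show ?case .
qed

lemma T_sq: "Tf * Tf = 1 - 4 * fps_X"
proof (rule fps_ext)
  fix n
  have "fps_nth (Tf * Tf) n = (\<Sum>i=0..n. ((1/2::complex) gchoose i) * ((1/2) gchoose (n-i))) * (-4)^n"
    unfolding Tf_def fps_mult_nth sum_distrib_right
    by (intro sum.cong refl) (simp add: algebra_simps power_add[symmetric])
  also have "\<dots> = (1 gchoose n) * (-4)^n"
    by (subst gbinomial_Vandermonde) simp
  also have "\<dots> = fps_nth (1 - 4 * fps_X) n"
  proof -
    have "(1::complex) gchoose n = of_nat (1 choose n)"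
      by (metis binomial_gbinomial of_nat_1)
    then show ?thesis
      by (cases n; cases "n - 1") (auto simp: fps_X_def)
  qed
  finally show "fps_nth (Tf * Tf) n = fps_nth (1 - 4 * fps_X) n" .
qed

lemma T_C: "Tf = 1 - 2 * fps_X * Cf"
proof (rule fps_ext)
  fix n show "fps_nth Tf n = fps_nth (1 - 2 * fps_X * Cf) n"
  proof (cases n)
    case 0 then show ?thesis by (simp add: Tf_def)
  next
    case (Suc m)
    have "fps_nth (2 * fps_X * Cf) n = 2 * catalan m"
      using Suc by (simp add: Cf_def mult.assoc)
    then show ?thesis using Suc t_Suc[of m] by (simp add: Tf_def)
  qed
qed

lemma segner_fps: "Cf = 1 + fps_X * Cf^2"
proof -
  have "(1 - 2 * fps_X * Cf) * (1 - 2 * fps_X * Cf) = 1 - 4 * fps_X"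
    using T_sq T_C by simp
  then have "4 * fps_X * (fps_X * Cf^2 - Cf + 1) = (0 :: complex fps)"
    by (simp add: algebra_simps power2_eq_square)
  moreover have "4 * fps_X \<noteq> (0 :: complex fps)"
    by (metis fps_X_neq_zero mult_eq_0_iff zero_neq_numeral)
  ultimately have "fps_X * Cf^2 - Cf + 1 = 0" by simp
  then show ?thesis by (simp add: algebra_simps)
qed



definition GG :: "nat \<Rightarrow> complex fps" where "GG m = Abs_fps (gg m)"

lemma GG_rec: "GG (Suc m) = GG m + fps_X * GG (Suc (Suc m))"
proof (rule fps_ext)
  fix n
  show "fps_nth (GG (Suc m)) n = fps_nth (GG m + fps_X * GG (Suc (Suc m))) n"
  proof (cases n)
    case 0
    have "gg (Suc m) 0 = 1" by (rule gg_0) simp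
    moreover have "gg m 0 = 1" by (cases m) (simp_all add: gg_0 gg_def[of 0])
    ultimately show ?thesis using 0 by (simp add: GG_def)
  next
    case (Suc q)
    have "gg (Suc m) (Suc q) = gg m (Suc q) + gg (Suc (Suc m)) q"
    proof (cases m)
      case 0
      then show ?thesis using gg_rec1[of q] by (simp add: gg_def[of 0] numeral_2_eq_2)
    next
      case (Suc p)
      then show ?thesis using gg_rec2[of p q] by (simp add: numeral_eq_Suc)
    qed
    then show ?thesis using Suc by (simp add: GG_def)
  qed
qed

lemma Cf_GG1: "Cf = GG 1"
proof (rule fps_ext)
  fix n
  have s: "(Suc (2*n) choose n) = (Suc (2*n) choose Suc n)"
    using binomial_symmetric[of n "Suc (2*n)"] by simp
  have h1: "Suc n * (Suc (2*n) choose n) = Suc (2*n) * (2*n choose n)"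
    unfolding s using Suc_times_binomial[of n "2*n"] by (simp del: binomial_Suc_Suc)
  have h1': "(of_nat n + 1) * (of_nat (Suc (2*n) choose n) :: complex) = (2 * of_nat n + 1) * of_nat (2*n choose n)"
    using arg_cong[OF h1, of "of_nat :: nat \<Rightarrow> complex"] by (simp add: algebra_simps del: binomial_Suc_Suc)
  have nz: "(of_nat n + 1 :: complex) \<noteq> 0" "(2 * of_nat n + 1 :: complex) \<noteq> 0"
  proof -
    have e: "(of_nat n + 1 :: complex) = of_nat (n + 1)" "(2 * of_nat n + 1 :: complex) = of_nat (2*n + 1)" by simp_all
    show "(of_nat n + 1 :: complex) \<noteq> 0" "(2 * of_nat n + 1 :: complex) \<noteq> 0"
      unfolding e of_nat_eq_0_iff by simp_all
  qed
  have c0: "catalan n = of_nat (2 * n choose n) / (of_nat n + 1)"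
    unfolding catalan_def by (simp add: add.commute)
  have g1: "gg 1 n = of_nat (Suc (2*n) choose n) / (2 * of_nat n + 1)"
    by (simp add: gg_def del: binomial_Suc_Suc)
  show "fps_nth Cf n = fps_nth (GG 1) n"
    unfolding Cf_def GG_def fps_nth_Abs_fps c0 g1 using h1' nz
    by (simp add: field_simps del: binomial_Suc_Suc)
qed

lemma GG0: "GG 0 = 1"
  by (rule fps_ext) (simp add: GG_def gg_def)

lemma Cf_pow: "Cf ^ m = GG m"
proof (induction m rule: less_induct)
  case (less m)
  show ?case
  proof (cases m)
    case 0 then show ?thesis by (simp add: GG0)
  next
    case (Suc p)
    show ?thesis
    proof (cases p)
      case 0 then show ?thesis using Suc Cf_GG1 by simp
    next
      case (Suc q)
      have l1: "Suc q < m" and l0: "q < m" using \<open>m = Suc p\<close> Suc by simp_all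
      have IH1: "Cf ^ Suc q = GG (Suc q)" by (rule less.IH[OF l1])
      have IH0: "Cf ^ q = GG q" by (rule less.IH[OF l0])
      have "Cf ^ Suc q = Cf ^ q * Cf" by simp
      also have "\<dots> = Cf ^ q * (1 + fps_X * Cf^2)" by (subst segner_fps) (rule refl)
      also have "\<dots> = Cf ^ q + fps_X * Cf ^ Suc (Suc q)"
        by (simp add: algebra_simps power2_eq_square)
      finally have "fps_X * Cf ^ Suc (Suc q) = fps_X * GG (Suc (Suc q))"
        using GG_rec[of q] IH1 IH0 by (simp add: algebra_simps)
      then have "Cf ^ Suc (Suc q) = GG (Suc (Suc q))"
        using fps_X_neq_zero by (simp add: mult_left_cancel)
      then show ?thesis using \<open>m = Suc p\<close> Suc by simp
    qed
  qed
qed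

lemma conv_pow_fps: "Abs_fps (conv_pow catalan m) = Cf ^ Suc m"
  by (induction m) (simp_all add: conv_fps Cf_def mult.commute)

lemma conv_pow_gg: "conv_pow catalan m = gg (Suc m)"
proof
  fix n
  have "conv_pow catalan m n = fps_nth (Abs_fps (conv_pow catalan m)) n" by simp
  also have "\<dots> = gg (Suc m) n" unfolding conv_pow_fps Cf_pow GG_def by simp
  finally show "conv_pow catalan m n = gg (Suc m) n" .
qed



definition cr :: "nat \<Rightarrow> real" where "cr n = real ((2*n) choose n) / real (n+1)"
definition uu :: "nat \<Rightarrow> real" where "uu n = real ((2*n) choose n) * (1/4)^n"

lemma catalan_cr: "catalan n = of_real (cr n)"
  by (simp add: catalan_def cr_def)

lemma cr_nonneg: "cr n \<ge> 0" by (simp add: cr_def)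

lemma central_Suc: "real (2 * Suc n choose Suc n) * (real n + 1) = 2 * (2 * real n + 1) * real (2*n choose n)"
proof -
  have s: "(Suc (2*n) choose n) = (Suc (2*n) choose Suc n)"
    using binomial_symmetric[of n "Suc (2*n)"] by simp
  have h1: "Suc n * (Suc (2*n) choose Suc n) = Suc (2*n) * (2*n choose n)"
    using Suc_times_binomial[of n "2*n"] by simp
  have h2: "(2 * Suc n choose Suc n) = 2 * (Suc (2*n) choose Suc n)"
  proof -
    have "(2 * Suc n choose Suc n) = (Suc (Suc (2*n)) choose Suc n)" by simp
    also have "\<dots> = (Suc (2*n) choose n) + (Suc (2*n) choose Suc n)"
      by (rule binomial_Suc_Suc)
    finally show ?thesis unfolding s by simp
  qed
  have h3: "(2 * Suc n choose Suc n) * Suc n = 2 * (Suc (2*n)) * (2*n choose n)"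
    unfolding h2 using h1 by (simp del: binomial_Suc_Suc add: mult_ac)
  show ?thesis
    using arg_cong[OF h3, of real] by (simp add: algebra_simps del: binomial_Suc_Suc)
qed

lemma uu_Suc: "uu (Suc n) * (2 * real n + 2) = uu n * (2 * real n + 1)"
proof -
  have c: "real (2 * Suc n choose Suc n) * (2 * real n + 2) = 4 * ((2 * real n + 1) * real (2*n choose n))"
    using central_Suc[of n] by (simp add: algebra_simps del: binomial_Suc_Suc)
  have "uu (Suc n) * (2 * real n + 2) = (real (2 * Suc n choose Suc n) * (2 * real n + 2)) * (1/4)^n / 4"
    unfolding uu_def by (simp add: mult_ac del: binomial_Suc_Suc)
  also have "\<dots> = uu n * (2 * real n + 1)"
    unfolding c uu_def by (simp add: mult_ac)
  finally show ?thesis .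
qed

lemma uu_nonneg: "uu n \<ge> 0" by (simp add: uu_def)

lemma uu_sq_bound: "uu n ^ 2 * (2 * real n + 1) \<le> 1"
proof (induction n)
  case 0 then show ?case by (simp add: uu_def)
next
  case (Suc n)
  have e: "uu (Suc n) ^ 2 * (2 * real n + 2)^2 = uu n ^ 2 * (2 * real n + 1)^2"
    using arg_cong[OF uu_Suc[of n], of "\<lambda>x. x^2"] by (simp add: power_mult_distrib)
  have "(uu (Suc n) ^ 2 * (2 * real n + 3)) * (2 * real n + 2)^2
      = (uu (Suc n) ^ 2 * (2 * real n + 2)^2) * (2 * real n + 3)" by (simp add: mult_ac)
  also have "\<dots> = (uu n ^ 2 * (2 * real n + 1)^2) * (2 * real n + 3)" by (simp only: e)
  also have "\<dots> = (uu n ^ 2 * (2 * real n + 1)) * ((2 * real n + 1) * (2 * real n + 3))"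
    by (simp add: power2_eq_square mult_ac)
  also have "\<dots> \<le> 1 * (2 * real n + 2)^2"
  proof (rule mult_mono)
    show "(2 * real n + 1) * (2 * real n + 3) \<le> (2 * real n + 2)^2"
      by (simp add: power2_eq_square algebra_simps)
  qed (use Suc.IH in auto)
  finally have "(uu (Suc n) ^ 2 * (2 * real n + 3)) * (2 * real n + 2)^2 \<le> 1 * (2 * real n + 2)^2" .
  then have "uu (Suc n) ^ 2 * (2 * real n + 3) \<le> 1"
    by (rule mult_right_le_imp_le) simp
  then show ?case by (simp add: algebra_simps)
qed

lemma uu_lim: "uu \<longlonglongrightarrow> 0"
proof -
  have "(\<lambda>n. uu n ^ 2) \<longlonglongrightarrow> 0"
  proof (rule tendsto_sandwich[of "\<lambda>n. 0" _ _ "\<lambda>n. inverse (real (Suc n))"])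
    show "\<forall>\<^sub>F n in sequentially. 0 \<le> uu n ^ 2" by simp
    have "uu n ^ 2 \<le> inverse (real (Suc n))" for n
    proof -
      have "uu n ^ 2 * (real n + 1) \<le> uu n ^ 2 * (2 * real n + 1)"
        by (intro mult_left_mono) auto
      then have "uu n ^ 2 * (real n + 1) \<le> 1" using uu_sq_bound[of n] by linarith
      then show ?thesis by (simp add: field_simps)
    qed
    then show "\<forall>\<^sub>F n in sequentially. uu n ^ 2 \<le> inverse (real (Suc n))" by simp
    show "(\<lambda>n. inverse (real (Suc n))) \<longlonglongrightarrow> 0" by (rule LIMSEQ_inverse_real_of_nat)
  qed simp
  then have "(\<lambda>n. sqrt (uu n ^ 2)) \<longlonglongrightarrow> sqrt 0" by (intro tendsto_intros)
  then show ?thesis using uu_nonneg by simp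
qed

lemma cr_sums: "(\<lambda>n. cr n * (1/4)^n) sums 2"
proof -
  have "(\<lambda>n. uu n - uu (Suc n)) sums (uu 0 - 0)" by (rule telescope_sums'[OF uu_lim])
  then have "(\<lambda>n. 2 * (uu n - uu (Suc n))) sums (2 * (uu 0 - 0))" by (rule sums_mult)
  moreover have "2 * (uu n - uu (Suc n)) = cr n * (1/4)^n" for n
  proof -
    have p: "real n + 1 \<noteq> 0" by linarith
    have "(2 * (uu n - uu (Suc n))) * (real n + 1) = uu n"
      using uu_Suc[of n] by (simp add: algebra_simps)
    then have "2 * (uu n - uu (Suc n)) = uu n / (real n + 1)"
      using p by (simp add: field_simps)
    also have "\<dots> = cr n * (1/4)^n" by (simp add: uu_def cr_def)
    finally show ?thesis .
  qed
  ultimately show ?thesis by (simp add: uu_def)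
qed



definition SS :: "complex \<Rightarrow> complex" where "SS z = (\<Sum>n. catalan n * z^n)"

lemma norm_catalan: "norm (catalan n) = cr n"
  using cr_nonneg by (simp add: catalan_cr)

lemma cat_summable: assumes "norm z \<le> 1/4"
  shows "summable (\<lambda>n. norm (catalan n * z^n))"
proof (rule summable_comparison_test')
  show "summable (\<lambda>n. cr n * (1/4)^n)" using cr_sums by (rule sums_summable)
  fix n :: nat
  have "norm z ^ n \<le> (1/4)^n" using assms by (intro power_mono) auto
  then show "norm (norm (catalan n * z^n)) \<le> cr n * (1/4)^n"
    using cr_nonneg by (simp add: norm_mult norm_power norm_catalan mult_left_mono)
qed

lemma conv_z: "conv P catalan n * z^n = (\<Sum>i\<le>n. (catalan i * z^i) * (P (n-i) * z^(n-i)))"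
proof -
  have "conv P catalan n * z^n = (\<Sum>i\<le>n. P (n-i) * catalan i * z^n)"
    by (simp add: conv_def sum_distrib_right)
  also have "\<dots> = (\<Sum>i\<le>n. (catalan i * z^i) * (P (n-i) * z^(n-i)))"
  proof (rule sum.cong)
    fix i assume "i \<in> {..n}"
    then have "z^n = z^i * z^(n-i)" by (simp flip: power_add)
    then show "P (n-i) * catalan i * z^n = (catalan i * z^i) * (P (n-i) * z^(n-i))"
      by (simp add: mult_ac)
  qed simp
  finally show ?thesis .
qed

lemma conv_pow_sums:
  assumes "norm z \<le> 1/4"
  shows "summable (\<lambda>n. norm (conv_pow catalan m n * z^n))
       \<and> (\<lambda>n. conv_pow catalan m n * z^n) sums (SS z ^ Suc m)"
proof (induction m)
  case 0
  have s0: "summable (\<lambda>n. norm (catalan n * z^n))" by (rule cat_summable[OF assms])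
  have "(\<lambda>n. catalan n * z^n) sums SS z"
    unfolding SS_def by (rule summable_sums[OF summable_norm_cancel[OF s0]])
  with s0 show ?case by simp
next
  case (Suc m)
  define a where "a = (\<lambda>i. catalan i * z^i)"
  define b where "b = (\<lambda>i. conv_pow catalan m i * z^i)"
  have sa: "summable (\<lambda>n. norm (a n))" unfolding a_def by (rule cat_summable[OF assms])
  have sb: "summable (\<lambda>n. norm (b n))" unfolding b_def by (rule conjunct1[OF Suc.IH])
  have sbs: "b sums (SS z ^ Suc m)" unfolding b_def by (rule conjunct2[OF Suc.IH])
  have eq: "conv_pow catalan (Suc m) n * z^n = (\<Sum>i\<le>n. a i * b (n-i))" for n
    unfolding a_def b_def conv_pow.simps by (rule conv_z)
  have C: "(\<lambda>n. \<Sum>i\<le>n. a i * b (n-i)) sums ((\<Sum>k. a k) * (\<Sum>k. b k))"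
    by (rule Cauchy_product_sums[OF sa sb])
  have A: "(\<Sum>k. a k) = SS z" unfolding a_def SS_def by (rule refl)
  have B: "(\<Sum>k. b k) = SS z ^ Suc m" using sbs by (rule sums_unique[symmetric])
  have fe: "(\<lambda>n. \<Sum>i\<le>n. a i * b (n-i)) = (\<lambda>n. conv_pow catalan (Suc m) n * z^n)"
    using eq by (intro ext) (rule sym)
  have S: "(\<lambda>n. conv_pow catalan (Suc m) n * z^n) sums (SS z ^ Suc (Suc m))"
    using C unfolding fe A B by (simp only: power_Suc)
  have sa': "summable (\<lambda>k. norm (norm (a k)))" using sa by (simp only: real_norm_def abs_norm_cancel)
  have sb': "summable (\<lambda>k. norm (norm (b k)))" using sb by (simp only: real_norm_def abs_norm_cancel)
  have "(\<lambda>n. \<Sum>i\<le>n. norm (a i) * norm (b (n-i))) sums ((\<Sum>k. norm (a k)) * (\<Sum>k. norm (b k)))"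
    by (rule Cauchy_product_sums[OF sa' sb'])
  then have "summable (\<lambda>n. \<Sum>i\<le>n. norm (a i) * norm (b (n-i)))" by (rule sums_summable)
  then have "summable (\<lambda>n. norm (conv_pow catalan (Suc m) n * z^n))"
  proof (rule summable_comparison_test')
    fix n :: nat
    have "norm (norm (conv_pow catalan (Suc m) n * z^n)) = norm (\<Sum>i\<le>n. a i * b (n-i))"
      by (simp only: eq real_norm_def abs_norm_cancel)
    also have "\<dots> \<le> (\<Sum>i\<le>n. norm (a i * b (n-i)))" by (rule norm_sum)
    also have "\<dots> = (\<Sum>i\<le>n. norm (a i) * norm (b (n-i)))" by (simp only: norm_mult)
    finally show "norm (norm (conv_pow catalan (Suc m) n * z^n)) \<le> (\<Sum>i\<le>n. norm (a i) * norm (b (n-i)))" .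
  qed
  with S show ?case by (intro conjI)
qed

lemma SS_quarter: "SS (1/4) = 2"
proof -
  have "(\<lambda>n. complex_of_real (cr n * (1/4)^n)) sums complex_of_real 2"
    using cr_sums by (simp only: sums_of_real_iff)
  then have "(\<lambda>n. catalan n * (1/4)^n) sums 2" by (simp add: catalan_cr)
  then show ?thesis unfolding SS_def by (simp add: sums_iff)
qed

lemma conv1: "conv_pow catalan 1 n = catalan (Suc n)"
proof -
  have "fps_nth Cf (Suc n) = fps_nth (1 + fps_X * Cf^2) (Suc n)" by (subst segner_fps) (rule refl)
  also have "\<dots> = fps_nth (Cf^2) n" by simp
  also have "\<dots> = fps_nth (Abs_fps (conv_pow catalan 1)) n" unfolding conv_pow_fps by (simp add: numeral_2_eq_2)
  finally show ?thesis by (simp add: Cf_def)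
qed

lemma SS_quad: assumes "norm z \<le> 1/4" shows "SS z = 1 + z * SS z ^ 2"
proof -
  have "(\<lambda>n. conv_pow catalan 1 n * z^n) sums (SS z ^ 2)"
    using conv_pow_sums[OF assms, of 1] by (simp add: numeral_2_eq_2)
  then have "(\<lambda>n. catalan (Suc n) * z^n) sums (SS z ^ 2)" by (simp only: conv1)
  then have "(\<lambda>n. z * (catalan (Suc n) * z^n)) sums (z * SS z ^ 2)" by (rule sums_mult)
  then have "(\<lambda>n. catalan (Suc n) * z^(Suc n)) sums (z * SS z ^ 2)" by (simp add: mult_ac)
  then have "(\<lambda>n. catalan n * z^n) sums (z * SS z ^ 2 + catalan 0 * z^0)"
    using sums_Suc_iff[of "\<lambda>n. catalan n * z^n" "z * SS z ^ 2"] by simp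
  then have "(\<lambda>n. catalan n * z^n) sums (z * SS z ^ 2 + 1)" by (simp add: catalan_def)
  then have "SS z = z * SS z ^ 2 + 1" unfolding SS_def by (rule sums_unique[symmetric])
  then show ?thesis using add.commute[of "z * SS z ^ 2" 1] by (rule trans)
qed

lemma SS_norm: assumes "norm z \<le> 1/4" shows "norm (SS z) \<le> 2"
proof -
  have "norm (SS z) \<le> (\<Sum>n. norm (catalan n * z^n))"
    unfolding SS_def by (rule summable_norm[OF cat_summable[OF assms]])
  also have "\<dots> \<le> (\<Sum>n. cr n * (1/4)^n)"
  proof (rule suminf_le)
    fix n
    have "norm z ^ n \<le> (1/4)^n" using assms by (intro power_mono) auto
    then show "norm (catalan n * z^n) \<le> cr n * (1/4)^n"
      using cr_nonneg by (simp add: norm_mult norm_power norm_catalan mult_left_mono)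
  qed (use cat_summable[OF assms] cr_sums sums_summable in auto)
  also have "\<dots> = 2" using cr_sums by (simp add: sums_iff)
  finally show ?thesis .
qed

lemma SS_gf: assumes "norm z < 1/4" shows "SS z = catalan_gf z"
proof (cases "z = 0")
  case True
  have "SS 0 = catalan 0" unfolding SS_def by (rule powser_zero)
  then show ?thesis using True by (simp add: catalan_gf_def catalan_def)
next
  case False
  define w where "w = 1 - 2 * z * SS z"
  have q: "SS z = 1 + z * SS z ^ 2" using SS_quad assms by simp
  have w2: "w^2 = 1 - 4 * z"
  proof -
    have "w^2 = 1 - 4 * z * (SS z - z * SS z ^ 2)"
      unfolding w_def by (simp add: power2_eq_square algebra_simps)
    also have "SS z - z * SS z ^ 2 = 1" using q by (simp add: algebra_simps)
    finally show ?thesis by simp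
  qed
  have "norm (2 * z * SS z) < 1"
  proof -
    have "norm (2 * z * SS z) = 2 * norm z * norm (SS z)" by (simp add: norm_mult)
    also have "\<dots> \<le> 2 * norm z * 2" using SS_norm assms by (intro mult_left_mono) auto
    also have "\<dots> < 1" using assms by simp
    finally show ?thesis .
  qed
  then have "Re (2 * z * SS z) < 1" using complex_Re_le_cmod[of "2 * z * SS z"] by linarith
  then have "Re w > 0" unfolding w_def by simp
  then have "csqrt (1 - 4 * z) = w" using w2 by (intro csqrt_unique) auto
  then show ?thesis using False unfolding catalan_gf_def w_def by (simp add: field_simps)
qed



lemma gg_ofreal: assumes "M > 0" shows "gg M n = of_real (norm (gg M n))"
proof -
  have "gg M n = of_real (real M / real (2*n+M) * real ((2*n+M) choose n))"
    using assms by (simp add: gg_def)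
  moreover have "real M / real (2*n+M) * real ((2*n+M) choose n) \<ge> 0" by simp
  ultimately show ?thesis by (metis norm_of_real abs_of_nonneg)
qed

lemma l1_sums: "(\<lambda>n. norm (conv_pow catalan m n) / 4^n) sums 2^(Suc m)"
proof -
  have z: "norm (1/4 :: complex) \<le> 1/4" by simp
  have "(\<lambda>n. conv_pow catalan m n * (1/4)^n) sums (SS (1/4) ^ Suc m)"
    by (rule conjunct2[OF conv_pow_sums[OF z]])
  then have s: "(\<lambda>n. conv_pow catalan m n * (1/4)^n) sums (2 ^ Suc m)"
    by (simp only: SS_quarter)
  have pt: "conv_pow catalan m n * (1/4)^n = of_real (norm (conv_pow catalan m n) / 4^n)" for n
  proof -
    define r where "r = norm (conv_pow catalan m n)"
    have h: "conv_pow catalan m n = of_real r"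
      unfolding r_def conv_pow_gg by (rule gg_ofreal) simp
    have "conv_pow catalan m n * (1/4)^n = of_real r * of_real ((1/4)^n)"
      unfolding h by simp
    also have "\<dots> = of_real (r / 4^n)"
      by (simp only: of_real_mult[symmetric]) (simp add: power_one_over)
    finally show ?thesis unfolding r_def .
  qed
  have fe: "(\<lambda>n. conv_pow catalan m n * (1/4)^n) = (\<lambda>n. complex_of_real (norm (conv_pow catalan m n) / 4^n))"
    by (rule ext) (rule pt)
  have c2: "(2::complex) ^ Suc m = complex_of_real (2 ^ Suc m)" by simp
  have "(\<lambda>n. complex_of_real (norm (conv_pow catalan m n) / 4^n)) sums complex_of_real (2 ^ Suc m)"
    using s unfolding fe c2 .
  then show ?thesis by (simp only: sums_of_real_iff)
qed

lemma z_sums: assumes "norm z < 1/4"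
  shows "(\<lambda>n. conv_pow catalan m n * z^n) sums (catalan_gf z ^ Suc m)"
proof -
  have z: "norm z \<le> 1/4" using assms by simp
  have "(\<lambda>n. conv_pow catalan m n * z^n) sums (SS z ^ Suc m)"
    using conv_pow_sums[OF z] by blast
  then show ?thesis using SS_gf[OF assms] by simp
qed

theorem proposition3p2:
  fixes k :: nat
  assumes "k \<ge> 1"
  defines "ak \<equiv> (\<lambda>n. catA (n+k-1) k)"
      and "bk \<equiv> (\<lambda>n. catB (n+k) k)"
  shows "in_l1w ak \<and> in_l1w bk
       \<and> l1w_norm ak = 2^(2*k-1) \<and> l1w_norm bk = 2^(2*k)
       \<and> (\<forall>z::complex. norm z < 1/4 \<longrightarrow>
             (\<lambda>n. ak n * z^n) sums (catalan_gf z ^ (2*k-1))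
           \<and> (\<lambda>n. bk n * z^n) sums (catalan_gf z ^ (2*k))
           \<and> Ztrans ak z = catalan_gf z ^ (2*k-1)
           \<and> Ztrans bk z = catalan_gf z ^ (2*k))
       \<and> ak = conv_pow catalan (2*k-2) \<and> bk = conv_pow catalan (2*k-1)"
proof -
  obtain j where kj: "k = Suc j" using assms by (cases k) auto
  have e1: "2*k-1 = Suc (2*j)" "2*k-2 = 2*j" "2*k = Suc (Suc (2*j))" using kj by simp_all
  have A: "ak = conv_pow catalan (2*j)"
  proof
    fix n
    have "ak n = gg (Suc (2*j)) n"
      unfolding ak_def kj by (simp add: catA_def gg_def algebra_simps)
    then show "ak n = conv_pow catalan (2*j) n" by (simp add: conv_pow_gg)
  qed
  have B: "bk = conv_pow catalan (Suc (2*j))"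
  proof
    fix n
    have r: "(of_nat (Suc (Suc (2*j))) :: complex) / of_nat (2*n + Suc (Suc (2*j))) = of_nat (Suc j) / of_nat (n + Suc j)"
    proof -
      have x: "(of_nat (Suc (Suc (2*j))) :: complex) = 2 * of_nat (Suc j)" by simp
      have y: "(of_nat (2*n + Suc (Suc (2*j))) :: complex) = 2 * of_nat (n + Suc j)" by simp
      show ?thesis unfolding x y by (rule mult_divide_mult_cancel_left) simp
    qed
    have i1: "2*(n+Suc j) = 2*n + Suc (Suc (2*j))" "n + Suc j - Suc j = n" by simp_all
    have b1: "bk n = of_nat (Suc j) / of_nat (n + Suc j) * of_nat ((2*n + Suc (Suc (2*j))) choose n)"
      unfolding bk_def catB_def kj by (simp only: i1)
    have g2: "gg (Suc (Suc (2*j))) n = of_nat (Suc (Suc (2*j))) / of_nat (2*n + Suc (Suc (2*j))) * of_nat ((2*n + Suc (Suc (2*j))) choose n)"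
      unfolding gg_def by (subst if_not_P) auto
    have "bk n = gg (Suc (Suc (2*j))) n"
      unfolding b1 g2 r by (rule refl)
    then show "bk n = conv_pow catalan (Suc (2*j)) n" by (simp only: conv_pow_gg)
  qed
  have LA: "(\<lambda>n. norm (ak n) / 4^n) sums 2^(2*k-1)" unfolding A kj using l1_sums[of "2*j"] by simp
  have LB: "(\<lambda>n. norm (bk n) / 4^n) sums 2^(2*k)" unfolding B kj using l1_sums[of "Suc (2*j)"] by simp
  have Z: "(\<lambda>n. ak n * z^n) sums (catalan_gf z ^ (2*k-1))
           \<and> (\<lambda>n. bk n * z^n) sums (catalan_gf z ^ (2*k))
           \<and> Ztrans ak z = catalan_gf z ^ (2*k-1)
           \<and> Ztrans bk z = catalan_gf z ^ (2*k)" if z: "norm z < 1/4" for z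
  proof -
    have a: "(\<lambda>n. ak n * z^n) sums (catalan_gf z ^ (2*k-1))" unfolding A kj using z_sums[OF z, of "2*j"] by simp
    have b: "(\<lambda>n. bk n * z^n) sums (catalan_gf z ^ (2*k))" unfolding B kj using z_sums[OF z, of "Suc (2*j)"] by simp
    show ?thesis using a b unfolding Ztrans_def by (simp add: sums_iff)
  qed
  have f1: "in_l1w ak" unfolding in_l1w_def using LA by (rule sums_summable)
  have f2: "in_l1w bk" unfolding in_l1w_def using LB by (rule sums_summable)
  have f3: "l1w_norm ak = 2^(2*k-1)" unfolding l1w_norm_def using LA by (rule sums_unique[symmetric])
  have f4: "l1w_norm bk = 2^(2*k)" unfolding l1w_norm_def using LB by (rule sums_unique[symmetric])
  have f5: "ak = conv_pow catalan (2*k-2)" unfolding e1(2) by (rule A)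
  have f6: "bk = conv_pow catalan (2*k-1)" unfolding e1(1) by (rule B)
  have Zall: "\<forall>z::complex. norm z < 1/4 \<longrightarrow>
             (\<lambda>n. ak n * z^n) sums (catalan_gf z ^ (2*k-1))
           \<and> (\<lambda>n. bk n * z^n) sums (catalan_gf z ^ (2*k))
           \<and> Ztrans ak z = catalan_gf z ^ (2*k-1)
           \<and> Ztrans bk z = catalan_gf z ^ (2*k)"
    using Z by (intro allI impI)
  show ?thesis by (intro conjI f1 f2 f3 f4 f5 f6 Zall)
qed


end
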